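(* Let $\mathbb{F}$ be a field of characteristic $2$ with at least $4$ elements, let $k\geq 1$ be an integer, and let $B\in M_{4k+2}(\mathbb{F})$ be a non-derogative matrix with characteristic polynomial $p_B(x)=x^{4k+2}+w_{4k+1}x^{4k+1}+w_{4k}x^{4k}+\dots+w_0$. Let $a\in\mathbb{F}$ with $a\neq 0,1$. (a) If $\operatorname{Trace}(B)=c\neq 0$, then there exist $N,D\in M_{4k+2}(\mathbb{F})$ with $B=N+D$, $N^2=0$, and $D$ diagonalizable with every eigenvalue in $\{0,\ c,\ ca,\ c(a+1)\}$. (b) If $\operatorname{Trace}(B)=0$ and $b\in\mathbb{F}$ satisfies $b^2=w_{4k}+a^2+a+1$ (such $b$ always exists when $\mathbb{F}$ is finite), then there exist $N,D\in M_{4k+2}(\mathbb{F})$ with $B=N+D$, $N^2=0$, and $D$ diagonalizable with every eigenvalue in $\{b,\ b+1,\ b+a,\ b+a+1\}$.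
   Context: A square matrix is non-derogative if its minimal polynomial equals its characteristic polynomial. A matrix $D\in M_n(\mathbb{F})$ is diagonalizable if there exists an invertible $U\in M_n(\mathbb{F})$ such that $U^{-1}DU$ is diagonal. *)

theory Defs
  imports "Jordan_Normal_Form.Char_Poly" "HOL-Computational_Algebra.Polynomial"
begin

definition mat_trace :: "'a :: comm_ring_1 mat \<Rightarrow> 'a" where
  "mat_trace A = (\<Sum>i<dim_row A. A $$ (i, i))"

definition poly_mat :: "'a :: comm_ring_1 poly \<Rightarrow> 'a mat \<Rightarrow> 'a mat" where
  "poly_mat p A = mat (dim_row A) (dim_row A)
     (\<lambda>(i, j). \<Sum>k\<le>degree p. coeff p k * (A ^\<^sub>m k) $$ (i, j))"

definition is_minimal_poly :: "'a :: field mat \<Rightarrow> 'a poly \<Rightarrow> bool" where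
  "is_minimal_poly A p \<longleftrightarrow>
     monic p \<and> poly_mat p A = 0\<^sub>m (dim_row A) (dim_row A) \<and>
     (\<forall>q. q \<noteq> 0 \<and> poly_mat q A = 0\<^sub>m (dim_row A) (dim_row A) \<longrightarrow> degree p \<le> degree q)"

definition non_derogative :: "'a :: field mat \<Rightarrow> bool" where
  "non_derogative A \<longleftrightarrow> is_minimal_poly A (char_poly A)"

definition diagonalizable :: "'a :: field mat \<Rightarrow> bool" where
  "diagonalizable D \<longleftrightarrow> (\<exists>Delta. diagonal_mat Delta \<and> similar_mat D Delta)"

end

theory Submission
  imports Defs "HOL-Computational_Algebra.Polynomial_Factorial"
begin



lemma pow_mat_Suc_left:
  assumes A: "A \<in> carrier_mat n n"
  shows "A ^\<^sub>m Suc k = A * A ^\<^sub>m k"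
proof (induction k)
  case 0
  then show ?case using A by simp
next
  case (Suc k)
  have "A ^\<^sub>m Suc (Suc k) = A ^\<^sub>m Suc k * A" by simp
  also have "\<dots> = (A * A ^\<^sub>m k) * A" using Suc by simp
  also have "\<dots> = A * (A ^\<^sub>m k * A)"
    using A by (intro assoc_mult_mat[of _ n n _ n _ n]) auto
  finally show ?case by simp
qed

lemma poly_mat_dim[simp]: "dim_row (poly_mat f A) = dim_row A" "dim_col (poly_mat f A) = dim_row A"
  unfolding poly_mat_def by auto

lemma poly_mat_carrier[simp]:
  assumes "A \<in> carrier_mat n n" shows "poly_mat f A \<in> carrier_mat n n"
  using assms unfolding poly_mat_def by auto

lemma poly_mat_index:
  assumes A: "A \<in> carrier_mat n n" and i: "i < n" and j: "j < n" and d: "degree f \<le> N"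
  shows "poly_mat f A $$ (i, j) = (\<Sum>k\<le>N. coeff f k * (A ^\<^sub>m k) $$ (i, j))"
proof -
  have "poly_mat f A $$ (i, j) = (\<Sum>k\<le>degree f. coeff f k * (A ^\<^sub>m k) $$ (i, j))"
    using A i j unfolding poly_mat_def by auto
  also have "\<dots> = (\<Sum>k\<le>N. coeff f k * (A ^\<^sub>m k) $$ (i, j))"
  proof (rule sum.mono_neutral_left)
    show "\<forall>k\<in>{..N} - {..degree f}. coeff f k * (A ^\<^sub>m k) $$ (i, j) = 0"
      by (auto simp: coeff_eq_0)
  qed (use d in auto)
  finally show ?thesis .
qed

lemma poly_mat_add:
  assumes A: "A \<in> carrier_mat n n"
  shows "poly_mat (f + g) A = poly_mat f A + poly_mat g A"
proof (rule eq_matI)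
  let ?N = "max (degree f) (degree g)"
  fix i j assume i: "i < dim_row (poly_mat f A + poly_mat g A)" and j: "j < dim_col (poly_mat f A + poly_mat g A)"
  then have i: "i < n" and j: "j < n" using A by auto
  have "degree (f + g) \<le> ?N" by (rule degree_add_le) auto
  then show "poly_mat (f + g) A $$ (i, j) = (poly_mat f A + poly_mat g A) $$ (i, j)"
    using A i j
    by (simp add: poly_mat_index[OF A i j, of _ ?N] sum.distrib algebra_simps)
qed (use A in auto)

lemma poly_mat_smult:
  assumes A: "A \<in> carrier_mat n n"
  shows "poly_mat (Polynomial.smult c f) A = c \<cdot>\<^sub>m poly_mat f A"
proof (rule eq_matI)
  fix i j assume i: "i < dim_row (c \<cdot>\<^sub>m poly_mat f A)" and j: "j < dim_col (c \<cdot>\<^sub>m poly_mat f A)"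
  then have i: "i < n" and j: "j < n" using A by auto
  have "poly_mat (Polynomial.smult c f) A $$ (i, j) = (\<Sum>k\<le>degree f. coeff (Polynomial.smult c f) k * (A ^\<^sub>m k) $$ (i, j))"
    by (rule poly_mat_index[OF A i j degree_smult_le])
  then show "poly_mat (Polynomial.smult c f) A $$ (i, j) = (c \<cdot>\<^sub>m poly_mat f A) $$ (i, j)"
    using A i j
    by (simp add: poly_mat_index[OF A i j order.refl] sum_distrib_left algebra_simps)
qed (use A in auto)

lemma poly_mat_0:
  assumes A: "A \<in> carrier_mat n n"
  shows "poly_mat 0 A = 0\<^sub>m n n"
  using A unfolding poly_mat_def by (intro eq_matI) auto

lemma poly_mat_pCons:
  assumes A: "A \<in> carrier_mat n n"
  shows "poly_mat (pCons c f) A = c \<cdot>\<^sub>m 1\<^sub>m n + A * poly_mat f A"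
proof (rule eq_matI)
  let ?N = "degree f"
  fix i j assume i: "i < dim_row (c \<cdot>\<^sub>m 1\<^sub>m n + A * poly_mat f A)"
    and j: "j < dim_col (c \<cdot>\<^sub>m 1\<^sub>m n + A * poly_mat f A)"
  then have i: "i < n" and j: "j < n" using A by auto
  have d: "degree (pCons c f) \<le> Suc ?N" by (simp add: degree_pCons_le)
  have "poly_mat (pCons c f) A $$ (i, j) = (\<Sum>k\<le>Suc ?N. coeff (pCons c f) k * (A ^\<^sub>m k) $$ (i, j))"
    by (rule poly_mat_index[OF A i j d])
  also have "\<dots> = c * (1\<^sub>m n) $$ (i,j) + (\<Sum>k\<le>?N. coeff f k * (A ^\<^sub>m Suc k) $$ (i, j))"
    using A by (subst sum.atMost_Suc_shift) simp
  also have "(\<Sum>k\<le>?N. coeff f k * (A ^\<^sub>m Suc k) $$ (i, j)) = (\<Sum>k\<le>?N. coeff f k * (A * A ^\<^sub>m k) $$ (i, j))"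
    using pow_mat_Suc_left[OF A] by simp
  also have "\<dots> = (\<Sum>k\<le>?N. coeff f k * (\<Sum>l<n. A $$ (i,l) * (A ^\<^sub>m k) $$ (l, j)))"
    using A i j by (simp add: scalar_prod_def atLeast0LessThan)
  also have "\<dots> = (\<Sum>l<n. A $$ (i,l) * (\<Sum>k\<le>?N. coeff f k * (A ^\<^sub>m k) $$ (l, j)))"
    by (simp add: sum_distrib_left sum_distrib_right algebra_simps) (rule sum.swap)
  also have "\<dots> = (\<Sum>l<n. A $$ (i,l) * poly_mat f A $$ (l, j))"
    using poly_mat_index[OF A _ j, of _ f ?N] by simp
  also have "\<dots> = (A * poly_mat f A) $$ (i, j)"
    using A i j by (simp add: scalar_prod_def atLeast0LessThan)
  finally show "poly_mat (pCons c f) A $$ (i, j) = (c \<cdot>\<^sub>m 1\<^sub>m n + A * poly_mat f A) $$ (i, j)"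
    using A i j by simp
qed (use A in auto)

lemma zero_smult_one_add:
  assumes "(M :: 'a :: comm_ring_1 mat) \<in> carrier_mat n n" shows "0 \<cdot>\<^sub>m 1\<^sub>m n + M = M"
  using assms by (intro eq_matI) auto

lemma poly_mat_mult:
  assumes A: "A \<in> carrier_mat n n"
  shows "poly_mat (f * g) A = poly_mat f A * poly_mat g A"
proof (induction f)
  case 0
  then show ?case using A by (simp add: poly_mat_0)
next
  case (pCons c f)
  have "poly_mat (pCons c f * g) A = poly_mat (Polynomial.smult c g + pCons 0 (f * g)) A"
    by (simp add: mult_pCons_left)
  also have "\<dots> = c \<cdot>\<^sub>m poly_mat g A + A * (poly_mat f A * poly_mat g A)"
  proof -
    have c: "A * (poly_mat f A * poly_mat g A) \<in> carrier_mat n n" using A by (meson mult_carrier_mat poly_mat_carrier)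
    show ?thesis
      using A pCons.IH zero_smult_one_add[OF c] by (simp add: poly_mat_add poly_mat_smult poly_mat_pCons)
  qed
  also have "\<dots> = (c \<cdot>\<^sub>m 1\<^sub>m n + A * poly_mat f A) * poly_mat g A"
  proof -
    have P: "poly_mat f A \<in> carrier_mat n n" "poly_mat g A \<in> carrier_mat n n" using A by auto
    have "(c \<cdot>\<^sub>m 1\<^sub>m n + A * poly_mat f A) * poly_mat g A = (c \<cdot>\<^sub>m 1\<^sub>m n) * poly_mat g A + (A * poly_mat f A) * poly_mat g A"
      using A P by (intro add_mult_distrib_mat[of _ n n]) auto
    also have "(c \<cdot>\<^sub>m 1\<^sub>m n) * poly_mat g A = c \<cdot>\<^sub>m poly_mat g A"
      using P by (simp add: mult_smult_assoc_mat[of _ n n _ n] left_mult_one_mat[of _ n n])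
    also have "(A * poly_mat f A) * poly_mat g A = A * (poly_mat f A * poly_mat g A)"
      using A P by (intro assoc_mult_mat[of _ n n _ n _ n]) auto
    finally show ?thesis by simp
  qed
  also have "\<dots> = poly_mat (pCons c f) A * poly_mat g A"
    using A by (simp add: poly_mat_pCons)
  finally show ?case .
qed

lemma poly_mat_const:
  assumes A: "A \<in> carrier_mat n n"
  shows "poly_mat [:c:] A = c \<cdot>\<^sub>m 1\<^sub>m n"
  using A by (simp add: poly_mat_pCons poly_mat_0)

lemma poly_mat_one:
  assumes A: "A \<in> carrier_mat n n"
  shows "poly_mat 1 A = 1\<^sub>m n"
proof -
  have "poly_mat 1 A = poly_mat [:1:] A" by (simp add: one_pCons)
  also have "\<dots> = 1 \<cdot>\<^sub>m 1\<^sub>m n" by (rule poly_mat_const[OF A])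
  also have "\<dots> = 1\<^sub>m n" by (intro eq_matI) auto
  finally show ?thesis .
qed

lemma poly_mat_x:
  assumes A: "A \<in> carrier_mat n n"
  shows "poly_mat [:0,1:] A = A"
proof -
  have "poly_mat [:0,1:] A = 0 \<cdot>\<^sub>m 1\<^sub>m n + A * poly_mat 1 A"
    using poly_mat_pCons[OF A, of 0 1] by (simp add: one_pCons)
  also have "\<dots> = A" using A by (simp add: poly_mat_one) (intro eq_matI, auto)
  finally show ?thesis .
qed

lemma poly_mat_comm:
  assumes A: "A \<in> carrier_mat n n"
  shows "poly_mat f A * poly_mat g A = poly_mat g A * poly_mat f A"
  by (metis A mult.commute poly_mat_mult)

lemma poly_mat_diff:
  assumes A: "A \<in> carrier_mat n n"
  shows "poly_mat (f - g) A = poly_mat f A - poly_mat g A"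
proof -
  have e: "f - g = f + Polynomial.smult (-1) g" by simp
  have "poly_mat (f - g) A = poly_mat (f + Polynomial.smult (-1) g) A" by (subst e) (rule refl)
  also have "\<dots> = poly_mat f A + (-1) \<cdot>\<^sub>m poly_mat g A" using A by (simp only: poly_mat_add[OF A] poly_mat_smult[OF A])
  also have "\<dots> = poly_mat f A - poly_mat g A"
    using A by (intro eq_matI) auto
  finally show ?thesis .
qed




definition bez :: "'a :: field poly \<Rightarrow> 'a poly \<Rightarrow> bool" where
  "bez f g \<longleftrightarrow> (\<exists>s t. s * f + t * g = 1)"

lemma bez_sym: "bez f g \<Longrightarrow> bez g f"
  unfolding bez_def by (metis add.commute)

lemma bez_mult: assumes "bez a c" "bez b c" shows "bez (a * b) c"
proof -
  obtain s t where 1: "s * a + t * c = 1" using assms(1) unfolding bez_def by blast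
  obtain s' t' where 2: "s' * b + t' * c = 1" using assms(2) unfolding bez_def by blast
  have "(s * a + t * c) * (s' * b + t' * c) = 1" using 1 2 by simp
  then have "(s * s') * (a * b) + (s * a * t' + t * s' * b + t * t' * c) * c = 1"
    by (simp add: algebra_simps)
  then show ?thesis unfolding bez_def by blast
qed

lemma bez_power: assumes "bez a c" shows "bez (a ^ k) c"
proof (induction k)
  case 0 show ?case unfolding bez_def by (intro exI[of _ 1] exI[of _ 0]) simp
next
  case (Suc k) then show ?case using bez_mult[OF assms] by simp
qed

lemma bez_dvd_mult: assumes "bez f g" "f dvd h" "g dvd h" shows "f * g dvd h"
proof -
  obtain s t where st: "s * f + t * g = 1" using assms(1) unfolding bez_def by blast
  obtain h1 where h1: "h = f * h1" using assms(2) unfolding dvd_def by blast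
  obtain h2 where h2: "h = g * h2" using assms(3) unfolding dvd_def by blast
  have "h = h * (s * f + t * g)" using st by simp
  also have "\<dots> = s * f * h + t * g * h" by (simp add: algebra_simps)
  also have "\<dots> = s * f * (g * h2) + t * g * (f * h1)" using h1 h2 by metis
  also have "\<dots> = (f * g) * (s * h2 + t * h1)" by (simp add: algebra_simps)
  finally show ?thesis by simp
qed

lemma bez_left_factor: assumes "bez (a * b) c" shows "bez a c"
proof -
  obtain s t where "s * (a * b) + t * c = 1" using assms unfolding bez_def by blast
  then have "(s * b) * a + t * c = 1" by (simp add: algebra_simps)
  then show ?thesis unfolding bez_def by blast
qed

lemma bez_common_unit: assumes "bez f g" "d dvd f" "d dvd g" shows "is_unit d"
proof -
  obtain s t where st: "s * f + t * g = 1" using assms(1) unfolding bez_def by blast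
  have "d dvd s * f + t * g" using assms(2,3) by simp
  then show ?thesis using st by simp
qed

lemma ideal_gcd:
  fixes f g :: "'a :: field poly"
  assumes f: "f \<noteq> 0"
  shows "\<exists>d s t. d = s * f + t * g \<and> d \<noteq> 0 \<and> d dvd f \<and> d dvd g"
proof -
  let ?P = "\<lambda>d. d \<noteq> 0 \<and> (\<exists>s t. d = s * f + t * g)"
  have "?P f" using f by (intro conjI exI[of _ 1] exI[of _ 0]) auto
  then obtain d where Pd: "?P d" and least: "\<And>d'. ?P d' \<Longrightarrow> degree d \<le> degree d'"
    using ex_has_least_nat[of ?P f degree] by blast
  obtain s t where st: "d = s * f + t * g" and dnz: "d \<noteq> 0" using Pd by blast
  have red: "x mod d = 0" if x: "\<exists>a b. x = a * f + b * g" for x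
  proof (rule ccontr)
    assume nz: "x mod d \<noteq> 0"
    obtain a b where ab: "x = a * f + b * g" using x by blast
    have "x mod d = x - (x div d) * d" by (simp add: minus_div_mult_eq_mod)
    also have "\<dots> = (a - x div d * s) * f + (b - x div d * t) * g"
      by (simp add: ab st algebra_simps)
    finally have "?P (x mod d)" using nz by blast
    then have "degree d \<le> degree (x mod d)" by (rule least)
    moreover have "degree (x mod d) < degree d" using nz dnz degree_mod_less by blast
    ultimately show False by simp
  qed
  have "f mod d = 0" by (rule red) (intro exI[of _ 1] exI[of _ 0], simp)
  moreover have "g mod d = 0" by (rule red) (intro exI[of _ 0] exI[of _ 1], simp)
  ultimately show ?thesis using st dnz by (auto simp: mod_eq_0_iff_dvd)
qed

lemma irred_bez:
  fixes p h :: "'a :: field poly"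
  assumes irr: "irreducible p" and nd: "\<not> p dvd h"
  shows "bez p h"
proof -
  have pnz: "p \<noteq> 0" using irr by (simp add: irreducible_def)
  obtain d s t where d: "d = s * p + t * h" "d \<noteq> 0" "d dvd p" "d dvd h"
    using ideal_gcd[OF pnz, of h] by blast
  obtain q where q: "p = d * q" using d(3) unfolding dvd_def by blast
  from irreducibleD[OF irr q] show ?thesis
  proof
    assume "is_unit d"
    then obtain e where e: "1 = d * e" unfolding dvd_def by blast
    have "(e * s) * p + (e * t) * h = 1" using d(1) e by (simp add: algebra_simps)
    then show ?thesis unfolding bez_def by blast
  next
    assume "is_unit q"
    then have "p dvd d" using q by (metis dvd_mult_unit_iff dvd_refl)
    then have "p dvd h" using d(4) by (rule dvd_trans)
    then show ?thesis using nd by simp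
  qed
qed

lemma irred_prime_dvd:
  fixes p :: "'a :: field poly"
  assumes irr: "irreducible p" and dvd: "p dvd a * b" and nd: "\<not> p dvd a"
  shows "p dvd b"
proof -
  obtain s t where st: "s * p + t * a = 1" using irred_bez[OF irr nd] unfolding bez_def by blast
  have "b = (b * s) * p + t * (a * b)" using st by (metis (no_types, lifting) mult.assoc mult.commute mult.left_neutral distrib_right)
  also have "p dvd \<dots>" using dvd by simp
  finally show ?thesis .
qed

lemma exists_irreducible_factor:
  fixes r :: "'a :: field poly"
  assumes "r \<noteq> 0" "\<not> is_unit r"
  shows "\<exists>p. irreducible p \<and> p dvd r"
  using assms
proof (induction "degree r" arbitrary: r rule: less_induct)
  case less
  show ?case
  proof (cases "irreducible r")
    case True then show ?thesis by auto
  next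
    case False
    then obtain a b where ab: "r = a * b" "\<not> is_unit a" "\<not> is_unit b"
      using less.prems by (auto simp: irreducible_def)
    have anz: "a \<noteq> 0" and bnz: "b \<noteq> 0" using ab less.prems by auto
    have "degree b > 0" using bnz ab(3) is_unit_iff_degree by blast
    then have "degree a < degree r" using ab(1) anz bnz by (simp add: degree_mult_eq)
    then obtain p where "irreducible p" "p dvd a" using less.hyps[of a] anz ab(2) by blast
    then show ?thesis using ab(1) by auto
  qed
qed

lemma irred_decompose:
  fixes p h :: "'a :: field poly"
  assumes irr: "irreducible p" and h: "h \<noteq> 0"
  shows "\<exists>j h0. h = p ^ j * h0 \<and> \<not> p dvd h0"
  using h
proof (induction "degree h" arbitrary: h rule: less_induct)
  case less
  show ?case
  proof (cases "p dvd h")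
    case False
    then show ?thesis by (intro exI[of _ 0] exI[of _ h]) simp
  next
    case True
    then obtain h' where h': "h = p * h'" unfolding dvd_def by blast
    have pnz: "p \<noteq> 0" and pnu: "\<not> is_unit p" using irr by (auto simp: irreducible_def)
    have h'nz: "h' \<noteq> 0" using h' less.prems by auto
    have "degree p > 0" using pnz pnu is_unit_iff_degree by blast
    then have "degree h' < degree h" using h' pnz h'nz by (simp add: degree_mult_eq)
    then obtain j h0 where "h' = p ^ j * h0" "\<not> p dvd h0" using less.hyps h'nz by blast
    then show ?thesis using h' by (intro exI[of _ "Suc j"] exI[of _ h0]) (simp add: mult.assoc)
  qed
qed




lemma mult_mat_vec_zero_right[simp]:
  assumes "dim_col A = m" shows "A *\<^sub>v 0\<^sub>v m = 0\<^sub>v (dim_row A)"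
  using assms by (intro eq_vecI) (auto simp: scalar_prod_def)

lemma zero_mat_mult_vec[simp]:
  assumes "v \<in> carrier_vec m" shows "0\<^sub>m n m *\<^sub>v v = 0\<^sub>v n"
  using assms by (intro eq_vecI) (auto simp: scalar_prod_def)

lemma pmv_carrier[simp]:
  assumes "A \<in> carrier_mat n n" "u \<in> carrier_vec n"
  shows "poly_mat h A *\<^sub>v u \<in> carrier_vec n"
  using assms by (meson mult_mat_vec_carrier poly_mat_carrier)

lemma poly_mat_mult_vec:
  assumes A: "A \<in> carrier_mat n n" and u: "u \<in> carrier_vec n"
  shows "poly_mat (f * g) A *\<^sub>v u = poly_mat f A *\<^sub>v (poly_mat g A *\<^sub>v u)"
  using A u by (simp add: poly_mat_mult[OF A] assoc_mult_mat_vec[of _ n n _ n])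

lemma poly_mat_mult_vec_comm:
  assumes A: "A \<in> carrier_mat n n" and u: "u \<in> carrier_vec n"
  shows "poly_mat f A *\<^sub>v (poly_mat g A *\<^sub>v u) = poly_mat g A *\<^sub>v (poly_mat f A *\<^sub>v u)"
  using A u by (metis poly_mat_mult_vec mult.commute)

lemma bezout_kill:
  fixes A :: "'a :: field mat"
  assumes A: "A \<in> carrier_mat n n" and u: "u \<in> carrier_vec n"
    and cop: "bez f g"
    and f: "poly_mat f A *\<^sub>v u = 0\<^sub>v n" and g: "poly_mat g A *\<^sub>v u = 0\<^sub>v n"
  shows "u = 0\<^sub>v n"
proof -
  obtain s t where st1: "s * f + t * g = 1" using cop unfolding bez_def by blast
  have "u = poly_mat 1 A *\<^sub>v u" using A u by (simp add: poly_mat_one)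
  also have "\<dots> = poly_mat (s * f + t * g) A *\<^sub>v u" by (simp add: st1)
  also have "\<dots> = poly_mat (s * f) A *\<^sub>v u + poly_mat (t * g) A *\<^sub>v u"
    using A u by (simp add: poly_mat_add[OF A] add_mult_distrib_mat_vec[of _ n n])
  also have "\<dots> = 0\<^sub>v n"
    using A u by (simp add: poly_mat_mult_vec[OF A u] f g)
  finally show ?thesis .
qed

lemma sum_kill:
  fixes A :: "'a :: field mat"
  assumes A: "A \<in> carrier_mat n n" and u: "u \<in> carrier_vec n" and w: "w \<in> carrier_vec n"
    and cop: "bez f g"
    and f: "poly_mat f A *\<^sub>v u = 0\<^sub>v n" and g: "poly_mat g A *\<^sub>v w = 0\<^sub>v n"
    and h: "poly_mat h A *\<^sub>v (u + w) = 0\<^sub>v n"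
  shows "poly_mat h A *\<^sub>v u = 0\<^sub>v n"
proof (rule bezout_kill[OF A _ cop])
  show y: "poly_mat h A *\<^sub>v u \<in> carrier_vec n" using A u by (meson mult_mat_vec_carrier poly_mat_carrier)
  show "poly_mat f A *\<^sub>v (poly_mat h A *\<^sub>v u) = 0\<^sub>v n"
    using A u f by (simp add: poly_mat_mult_vec_comm[OF A u, of f h])
  have hw: "poly_mat g A *\<^sub>v (poly_mat h A *\<^sub>v w) = 0\<^sub>v n"
    using A w g by (simp add: poly_mat_mult_vec_comm[OF A w, of g h])
  have "0\<^sub>v n = poly_mat g A *\<^sub>v (poly_mat h A *\<^sub>v (u + w))" using A h by simp
  also have "\<dots> = poly_mat g A *\<^sub>v (poly_mat h A *\<^sub>v u + poly_mat h A *\<^sub>v w)"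
    by (simp add: mult_add_distrib_mat_vec[OF poly_mat_carrier[OF A] u w])
  also have "\<dots> = poly_mat g A *\<^sub>v (poly_mat h A *\<^sub>v u) + poly_mat g A *\<^sub>v (poly_mat h A *\<^sub>v w)"
    by (rule mult_add_distrib_mat_vec[OF poly_mat_carrier[OF A]]) (use A u w in auto)
  also have "\<dots> = poly_mat g A *\<^sub>v (poly_mat h A *\<^sub>v u)" using A u hw by simp
  finally show "poly_mat g A *\<^sub>v (poly_mat h A *\<^sub>v u) = 0\<^sub>v n" by simp
qed

lemma nonzero_mat_vec:
  assumes M: "(M :: 'a :: comm_ring_1 mat) \<in> carrier_mat n n" and nz: "M \<noteq> 0\<^sub>m n n"
  shows "\<exists>z\<in>carrier_vec n. M *\<^sub>v z \<noteq> 0\<^sub>v n"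
proof -
  have "\<exists>i<n. \<exists>j<n. M $$ (i,j) \<noteq> 0"
  proof (rule ccontr)
    assume "\<not> ?thesis"
    then have "M = 0\<^sub>m n n" using M by (intro eq_matI) auto
    then show False using nz by simp
  qed
  then obtain i j where ij: "i < n" "j < n" "M $$ (i,j) \<noteq> 0" by blast
  have eq: "(M *\<^sub>v unit_vec n j) $ i = M $$ (i,j)"
    using M ij by (simp add: scalar_prod_right_unit)
  have "M *\<^sub>v unit_vec n j \<noteq> 0\<^sub>v n"
  proof
    assume "M *\<^sub>v unit_vec n j = 0\<^sub>v n"
    then have "(M *\<^sub>v unit_vec n j) $ i = 0" using ij by simp
    then show False using eq ij by simp
  qed
  then show ?thesis by (intro bexI[of _ "unit_vec n j"]) auto
qed

lemma prime_power_vector: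
  fixes B :: "'a :: field mat"
  assumes B: "B \<in> carrier_mat n n"
    and mu0: "poly_mat \<mu> B = 0\<^sub>m n n" and dmu: "degree \<mu> = n"
    and minim: "\<forall>q. q \<noteq> 0 \<and> poly_mat q B = 0\<^sub>m n n \<longrightarrow> n \<le> degree q"
    and mu_nz: "\<mu> \<noteq> 0"
    and irr: "irreducible p" and e1: "e \<ge> 1" and mu: "\<mu> = p ^ e * t" and nd: "\<not> p dvd t"
  shows "\<exists>u\<in>carrier_vec n. poly_mat (p ^ e) B *\<^sub>v u = 0\<^sub>v n \<and>
           (\<forall>h. poly_mat h B *\<^sub>v u = 0\<^sub>v n \<longrightarrow> p ^ e dvd h)"
proof -
  have pnz: "p \<noteq> 0" and nunit: "\<not> is_unit p" using irr by (auto simp: irreducible_def)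
  have tnz: "t \<noteq> 0" using mu mu_nz by auto
  define q where "q = p ^ (e - 1) * t"
  have pe: "p ^ e = p * p ^ (e - 1)" using e1 by (cases e) auto
  have muq: "\<mu> = p * q" unfolding q_def using mu pe by (simp add: mult.assoc)
  have dpi: "degree p > 0" using nunit pnz is_unit_iff_degree by blast
  have q_nz: "q \<noteq> 0" using muq mu_nz by auto
  have "degree \<mu> = degree p + degree q" using muq pnz q_nz by (simp add: degree_mult_eq)
  then have "degree q < n" using dpi dmu by linarith
  then have "poly_mat q B \<noteq> 0\<^sub>m n n" using minim q_nz by auto
  then obtain z where z: "z \<in> carrier_vec n" and zne: "poly_mat q B *\<^sub>v z \<noteq> 0\<^sub>v n"
    using nonzero_mat_vec[of "poly_mat q B" n] B by auto
  define u where "u = poly_mat t B *\<^sub>v z"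
  have u: "u \<in> carrier_vec n" using B z by (simp add: u_def)
  have ukill: "poly_mat (p ^ e) B *\<^sub>v u = 0\<^sub>v n"
    unfolding u_def using B z mu0 by (simp add: poly_mat_mult_vec[symmetric] mu[symmetric])
  have "\<forall>h. poly_mat h B *\<^sub>v u = 0\<^sub>v n \<longrightarrow> p ^ e dvd h"
  proof (intro allI impI)
    fix h assume h: "poly_mat h B *\<^sub>v u = 0\<^sub>v n"
    show "p ^ e dvd h"
    proof (cases "h = 0")
      case True then show ?thesis by simp
    next
      case hnz: False
      obtain j h0 where h0: "h = p ^ j * h0" and nd0: "\<not> p dvd h0"
        using irred_decompose[OF irr hnz] by blast
      show ?thesis
      proof (cases "e \<le> j")
        case True
        then have "p ^ e dvd p ^ j" by (simp add: le_imp_power_dvd)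
        then show ?thesis using h0 by simp
      next
        case False
        then have jlt: "j < e" by simp
        have cop: "bez h0 (p ^ e)"
          using bez_power[OF irred_bez[OF irr nd0]] by (simp add: bez_sym)
        define y where "y = poly_mat (p ^ j) B *\<^sub>v u"
        have y: "y \<in> carrier_vec n" using B u by (simp add: y_def)
        have y1: "poly_mat h0 B *\<^sub>v y = 0\<^sub>v n"
          unfolding y_def using B u h h0 by (simp add: poly_mat_mult_vec[symmetric] mult.commute)
        have y2: "poly_mat (p ^ e) B *\<^sub>v y = 0\<^sub>v n"
          unfolding y_def using B u ukill by (simp add: poly_mat_mult_vec_comm[OF B u, of "p ^ e"])
        have y0: "y = 0\<^sub>v n" by (rule bezout_kill[OF B y cop y1 y2])
        have "poly_mat (p ^ (e - 1)) B *\<^sub>v u = poly_mat (p ^ (e - 1 - j) * p ^ j) B *\<^sub>v u"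
          using jlt by (simp add: power_add[symmetric])
        also have "\<dots> = 0\<^sub>v n" using B u y0 by (simp add: poly_mat_mult_vec y_def)
        finally have "poly_mat (p ^ (e - 1)) B *\<^sub>v u = 0\<^sub>v n" .
        then have "poly_mat q B *\<^sub>v z = 0\<^sub>v n"
          unfolding q_def u_def using B z by (simp add: poly_mat_mult_vec)
        then show ?thesis using zne by simp
      qed
    qed
  qed
  then show ?thesis using u ukill by blast
qed

lemma unitary_divisor_vector:
  fixes B :: "'a :: field mat"
  assumes B: "B \<in> carrier_mat n n"
    and mu0: "poly_mat \<mu> B = 0\<^sub>m n n" and dmu: "degree \<mu> = n"
    and minim: "\<forall>q. q \<noteq> 0 \<and> poly_mat q B = 0\<^sub>m n n \<longrightarrow> n \<le> degree q"
    and mu_nz: "\<mu> \<noteq> 0"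
    and r: "\<mu> = r * s" "bez r s"
  shows "\<exists>u\<in>carrier_vec n. poly_mat r B *\<^sub>v u = 0\<^sub>v n \<and>
           (\<forall>h. poly_mat h B *\<^sub>v u = 0\<^sub>v n \<longrightarrow> r dvd h)"
  using r
proof (induction "degree r" arbitrary: r s rule: less_induct)
  case less
  have rnz: "r \<noteq> 0" and snz: "s \<noteq> 0" using less.prems mu_nz by auto
  show ?case
  proof (cases "is_unit r")
    case True
    have "\<forall>h. r dvd h" using True by (blast intro: unit_imp_dvd)
    then show ?thesis using B by (intro bexI[of _ "0\<^sub>v n"]) auto
  next
    case False
    obtain p where irr: "irreducible p" and pr: "p dvd r"
      using exists_irreducible_factor[OF rnz False] by blast
    have pnz: "p \<noteq> 0" and nunit: "\<not> is_unit p" using irr by (auto simp: irreducible_def)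
    obtain e r' where r': "r = p ^ e * r'" and nd': "\<not> p dvd r'"
      using irred_decompose[OF irr rnz] by blast
    have e1: "e \<ge> 1"
    proof (rule ccontr)
      assume "\<not> e \<ge> 1" then have "e = 0" by simp
      then show False using r' nd' pr by simp
    qed
    have nds: "\<not> p dvd s"
    proof
      assume "p dvd s"
      then have "is_unit p" using bez_common_unit[OF less.prems(2) pr] by simp
      then show False using nunit by simp
    qed
    have ndt: "\<not> p dvd r' * s" using irred_prime_dvd[OF irr] nd' nds by blast
    have mu': "\<mu> = p ^ e * (r' * s)" using less.prems(1) r' by (simp add: mult.assoc)
    obtain u1 where u1: "u1 \<in> carrier_vec n" and k1: "poly_mat (p ^ e) B *\<^sub>v u1 = 0\<^sub>v n"
      and d1: "\<forall>h. poly_mat h B *\<^sub>v u1 = 0\<^sub>v n \<longrightarrow> p ^ e dvd h"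
      using prime_power_vector[OF B mu0 dmu minim mu_nz irr e1 mu' ndt] by blast
    have r'nz: "r' \<noteq> 0" using r' rnz by auto
    have "degree p > 0" using nunit pnz is_unit_iff_degree by blast
    then have "degree (p ^ e) > 0" using e1 pnz by (simp add: degree_power_eq)
    then have dlt: "degree r' < degree r" using r' r'nz pnz by (simp add: degree_mult_eq)
    have bpr': "bez (p ^ e) r'" using bez_power[OF irred_bez[OF irr nd']] .
    have bs: "bez r' s"
    proof -
      have "bez (r' * p ^ e) s" using less.prems(2) r' by (simp add: mult.commute)
      then show ?thesis by (rule bez_left_factor)
    qed
    have bs2: "bez r' (p ^ e * s)" using bez_mult[OF bpr' bez_sym[OF bs]] by (rule bez_sym)
    have mu2: "\<mu> = r' * (p ^ e * s)" using less.prems(1) r' by (simp add: algebra_simps)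
    obtain u2 where u2: "u2 \<in> carrier_vec n" and k2: "poly_mat r' B *\<^sub>v u2 = 0\<^sub>v n"
      and d2: "\<forall>h. poly_mat h B *\<^sub>v u2 = 0\<^sub>v n \<longrightarrow> r' dvd h"
      using less.hyps[OF dlt mu2 bs2] by blast
    show ?thesis
    proof (intro bexI[of _ "u1 + u2"] conjI allI impI)
      show "u1 + u2 \<in> carrier_vec n" using u1 u2 by simp
      have "poly_mat r B *\<^sub>v (u1 + u2) = poly_mat (r' * p ^ e) B *\<^sub>v u1 + poly_mat (p ^ e * r') B *\<^sub>v u2"
        using B u1 u2 r' by (simp add: mult_add_distrib_mat_vec[of _ n n] mult.commute)
      also have "\<dots> = 0\<^sub>v n"
        using B u1 u2 k1 k2 by (simp add: poly_mat_mult_vec)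
      finally show "poly_mat r B *\<^sub>v (u1 + u2) = 0\<^sub>v n" .
    next
      fix h assume h: "poly_mat h B *\<^sub>v (u1 + u2) = 0\<^sub>v n"
      have "poly_mat h B *\<^sub>v u1 = 0\<^sub>v n" by (rule sum_kill[OF B u1 u2 bpr' k1 k2 h])
      then have dd1: "p ^ e dvd h" using d1 by auto
      have h': "poly_mat h B *\<^sub>v (u2 + u1) = 0\<^sub>v n" using h comm_add_vec[OF u1 u2] by simp
      have "poly_mat h B *\<^sub>v u2 = 0\<^sub>v n" by (rule sum_kill[OF B u2 u1 bez_sym[OF bpr'] k2 k1 h'])
      then have dd2: "r' dvd h" using d2 by auto
      show "r dvd h" using bez_dvd_mult[OF bpr' dd1 dd2] r' by simp
    qed
  qed
qed

lemma cyclic_vector: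
  fixes B :: "'a :: field mat"
  assumes B: "B \<in> carrier_mat n n" and nd: "non_derogative B"
  shows "\<exists>v\<in>carrier_vec n. \<forall>h. poly_mat h B *\<^sub>v v = 0\<^sub>v n \<longrightarrow> h = 0 \<or> n \<le> degree h"
proof -
  let ?\<mu> = "char_poly B"
  have dB: "dim_row B = n" using B by auto
  have mm: "is_minimal_poly B ?\<mu>" using nd unfolding non_derogative_def .
  have mu0: "poly_mat ?\<mu> B = 0\<^sub>m n n" and monic: "monic ?\<mu>"
    and minim0: "\<forall>q. q \<noteq> 0 \<and> poly_mat q B = 0\<^sub>m n n \<longrightarrow> degree ?\<mu> \<le> degree q"
    using mm dB unfolding is_minimal_poly_def by auto
  have dmu: "degree ?\<mu> = n" using degree_monic_char_poly[OF B] by simp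
  have minim: "\<forall>q. q \<noteq> 0 \<and> poly_mat q B = 0\<^sub>m n n \<longrightarrow> n \<le> degree q" using minim0 dmu by simp
  have mnz: "?\<mu> \<noteq> 0" using monic by auto
  have b1: "bez ?\<mu> 1" unfolding bez_def by (intro exI[of _ 0] exI[of _ 1]) simp
  obtain v where v: "v \<in> carrier_vec n"
    and vd: "\<forall>h. poly_mat h B *\<^sub>v v = 0\<^sub>v n \<longrightarrow> ?\<mu> dvd h"
    using unitary_divisor_vector[OF B mu0 dmu minim mnz _ b1] by auto
  show ?thesis
  proof (intro bexI[OF _ v] allI impI)
    fix h assume "poly_mat h B *\<^sub>v v = 0\<^sub>v n"
    then have "?\<mu> dvd h" using vd by auto
    show "h = 0 \<or> n \<le> degree h"
    proof (cases "h = 0")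
      case False
      then have "degree ?\<mu> \<le> degree h" using \<open>?\<mu> dvd h\<close> by (rule dvd_imp_degree_le[rotated])
      then show ?thesis using dmu by simp
    qed simp
  qed
qed




lemma lin_indep_deg:
  fixes f :: "nat \<Rightarrow> 'a :: field poly"
  assumes deg: "\<And>i. i < n \<Longrightarrow> degree (f i) = i \<and> f i \<noteq> 0"
    and z: "(\<Sum>i<n. Polynomial.smult (c i) (f i)) = 0"
  shows "\<forall>i<n. c i = 0"
  using deg z
proof (induction n)
  case 0 then show ?case by simp
next
  case (Suc n)
  have dn: "degree (f n) = n" and fnz: "f n \<noteq> 0" using Suc.prems(1)[of n] by auto
  have c0: "coeff (\<Sum>i<n. Polynomial.smult (c i) (f i)) n = 0"
  proof -
    have "coeff (\<Sum>i<n. Polynomial.smult (c i) (f i)) n = (\<Sum>i<n. c i * coeff (f i) n)"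
      by (simp add: coeff_sum)
    also have "\<dots> = 0"
    proof (rule sum.neutral, intro ballI)
      fix i assume "i \<in> {..<n}"
      then have "degree (f i) < n" using Suc.prems(1)[of i] by auto
      then show "c i * coeff (f i) n = 0" by (simp add: coeff_eq_0)
    qed
    finally show ?thesis .
  qed
  have e1: "coeff (\<Sum>i<Suc n. Polynomial.smult (c i) (f i)) n = c n * coeff (f n) n"
    using c0 by simp
  have e2: "coeff (\<Sum>i<Suc n. Polynomial.smult (c i) (f i)) n = 0"
    using Suc.prems(2) by simp
  have "coeff (f n) n \<noteq> 0" using dn fnz by (metis leading_coeff_0_iff)
  then have cn: "c n = 0" using e1 e2 by simp
  then have "(\<Sum>i<n. Polynomial.smult (c i) (f i)) = 0" using Suc.prems(2) by simp
  then have "\<forall>i<n. c i = 0" using Suc.IH Suc.prems(1) by auto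
  then show ?case using cn less_Suc_eq by auto
qed

lemma degree_lin_comb_less:
  fixes f :: "nat \<Rightarrow> 'a :: field poly"
  assumes deg: "\<And>i. i < n \<Longrightarrow> degree (f i) = i" and n: "n > 0"
  shows "degree (\<Sum>i<n. Polynomial.smult (c i) (f i)) < n"
proof -
  have "degree (\<Sum>i<n. Polynomial.smult (c i) (f i)) \<le> n - 1"
  proof (rule degree_le, intro allI impI)
    fix k assume k: "n - 1 < k"
    have "coeff (\<Sum>i<n. Polynomial.smult (c i) (f i)) k = (\<Sum>i<n. c i * coeff (f i) k)"
      by (simp add: coeff_sum)
    also have "\<dots> = 0"
    proof (rule sum.neutral, intro ballI)
      fix i assume "i \<in> {..<n}"
      then have "degree (f i) < k" using deg[of i] k by auto
      then show "c i * coeff (f i) k = 0" by (simp add: coeff_eq_0)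
    qed
    finally show "coeff (\<Sum>i<n. Polynomial.smult (c i) (f i)) k = 0" .
  qed
  then show ?thesis using n by linarith
qed

lemma pm_sum_vec:
  assumes B: "B \<in> carrier_mat n n" and v: "v \<in> carrier_vec n" and r: "r < n" and I: "finite I"
  shows "(poly_mat (\<Sum>i\<in>I. g i) B *\<^sub>v v) $ r = (\<Sum>i\<in>I. (poly_mat (g i) B *\<^sub>v v) $ r)"
  using I
proof (induction I rule: finite_induct)
  case empty
  then show ?case using B v r by (simp add: poly_mat_0[OF B])
next
  case (insert x F)
  have "poly_mat (\<Sum>i\<in>insert x F. g i) B *\<^sub>v v = poly_mat (g x) B *\<^sub>v v + poly_mat (\<Sum>i\<in>F. g i) B *\<^sub>v v"
    using insert B v by (simp add: poly_mat_add[OF B] add_mult_distrib_mat_vec[of _ n n])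
  then show ?case using insert B v r by simp
qed

lemma pm_smult_vec:
  assumes B: "B \<in> carrier_mat n n" and v: "v \<in> carrier_vec n" and r: "r < n"
  shows "(poly_mat (Polynomial.smult c f) B *\<^sub>v v) $ r = c * (poly_mat f B *\<^sub>v v) $ r"
proof -
  have "(poly_mat (Polynomial.smult c f) B *\<^sub>v v) $ r = ((c \<cdot>\<^sub>m poly_mat f B) *\<^sub>v v) $ r"
    by (simp add: poly_mat_smult[OF B])
  also have "\<dots> = c * (poly_mat f B *\<^sub>v v) $ r"
    using B v r by (simp add: scalar_prod_def sum_distrib_left algebra_simps)
  finally show ?thesis .
qed

lemma mat_inverse_exists:
  fixes K :: "'a :: field mat"
  assumes K: "K \<in> carrier_mat n n"
    and inj: "\<And>c. c \<in> carrier_vec n \<Longrightarrow> K *\<^sub>v c = 0\<^sub>v n \<Longrightarrow> c = 0\<^sub>v n"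
  shows "\<exists>Ki. Ki \<in> carrier_mat n n \<and> K * Ki = 1\<^sub>m n \<and> Ki * K = 1\<^sub>m n"
proof -
  have "det K \<noteq> 0"
    using det_0_iff_vec_prod_zero[OF K] inj by auto
  then have "K \<in> Units (ring_mat TYPE('a) n undefined)" by (rule det_non_zero_imp_unit[OF K])
  then show ?thesis unfolding Units_def by (auto simp: ring_mat_simps)
qed

lemma trace_mult_comm:
  fixes A B :: "'a :: comm_ring_1 mat"
  assumes A: "A \<in> carrier_mat n n" and B: "B \<in> carrier_mat n n"
  shows "mat_trace (A * B) = mat_trace (B * A)"
proof -
  have "mat_trace (A * B) = (\<Sum>i<n. \<Sum>k<n. A $$ (i,k) * B $$ (k,i))"
    using A B by (simp add: mat_trace_def scalar_prod_def atLeast0LessThan)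
  also have "\<dots> = (\<Sum>k<n. \<Sum>i<n. B $$ (k,i) * A $$ (i,k))"
    by (subst sum.swap) (simp add: mult.commute)
  also have "\<dots> = mat_trace (B * A)"
    using A B by (simp add: mat_trace_def scalar_prod_def atLeast0LessThan)
  finally show ?thesis .
qed

lemma sum_even_odd:
  fixes f :: "nat \<Rightarrow> 'a :: comm_monoid_add"
  shows "(\<Sum>r<2 * m. f r) = (\<Sum>j<m. f (2 * j) + f (2 * j + 1))"
  by (induction m) (simp_all add: add.assoc)




lemma pm_add_vec:
  assumes B: "B \<in> carrier_mat n n" and v: "v \<in> carrier_vec n" and r: "r < n"
  shows "(poly_mat (f + g) B *\<^sub>v v) $ r = (poly_mat f B *\<^sub>v v) $ r + (poly_mat g B *\<^sub>v v) $ r"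
  using B v r by (simp add: poly_mat_add[OF B] add_mult_distrib_mat_vec[of _ n n])

lemma pm_x_vec:
  assumes B: "B \<in> carrier_mat n n" and v: "v \<in> carrier_vec n"
  shows "B *\<^sub>v (poly_mat f B *\<^sub>v v) = poly_mat ([:0,1:] * f) B *\<^sub>v v"
proof -
  have "poly_mat ([:0,1:] * f) B *\<^sub>v v = poly_mat [:0,1:] B *\<^sub>v (poly_mat f B *\<^sub>v v)"
    by (rule poly_mat_mult_vec[OF B v])
  then show ?thesis by (simp only: poly_mat_x[OF B])
qed

locale core =
  fixes B :: "'a :: field mat" and n m :: nat and v :: "'a vec" and \<rho> s :: 'a and lam :: "nat \<Rightarrow> 'a"
  assumes B: "B \<in> carrier_mat n n" and nm: "n = 2 * m" and m1: "m \<ge> 1" and v: "v \<in> carrier_vec n"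
    and cyc: "\<forall>h. poly_mat h B *\<^sub>v v = 0\<^sub>v n \<longrightarrow> h = 0 \<or> n \<le> degree h"
    and lr: "\<forall>j<m-1. lam j \<noteq> \<rho>" and sr: "s \<noteq> \<rho>" and sl: "\<forall>j<m-1. s \<noteq> lam j"
    and st: "s = mat_trace B - of_nat m * \<rho> - (\<Sum>j<m-1. lam j)"
begin

definition xr :: "'a poly" where "xr = [:-\<rho>, 1:]"
definition w :: "nat \<Rightarrow> 'a poly" where "w j = (\<Prod>i<j. xr * [:-lam i, 1:])"
definition fp :: "nat \<Rightarrow> 'a poly" where "fp i = (if even i then w (i div 2) else xr * w (i div 2))"
definition z :: "nat \<Rightarrow> 'a vec" where "z i = poly_mat (fp i) B *\<^sub>v v"
definition Kq :: "'a mat" where "Kq = mat n n (\<lambda>(r,i). z i $ r)"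

lemma n_pos: "n > 0" using nm m1 by simp

lemma w_props: "monic (w j) \<and> degree (w j) = 2 * j"
proof (induction j)
  case 0 then show ?case by (simp add: w_def)
next
  case (Suc j)
  define q where "q = xr * [:-lam j, 1:]"
  have ws: "w (Suc j) = w j * q" by (simp add: w_def q_def)
  have q: "lead_coeff q = 1 \<and> degree q = 2"
    unfolding q_def by (simp add: xr_def degree_mult_eq lead_coeff_mult)
  have wnz: "w j \<noteq> 0" using Suc by auto
  have qnz: "q \<noteq> 0" using q by auto
  have "degree (w j * q) = 2 * j + 2" using Suc q wnz qnz by (simp add: degree_mult_eq)
  moreover have "lead_coeff (w j * q) = 1"
  proof -
    have a: "lead_coeff (w j) = 1" using Suc by blast
    have b: "lead_coeff q = 1" using q by blast
    show ?thesis by (simp only: lead_coeff_mult a b) simp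
  qed
  ultimately show ?case unfolding ws by simp
qed

lemma fp_props: "degree (fp i) = i \<and> fp i \<noteq> 0"
proof (cases "even i")
  case True
  then show ?thesis using w_props[of "i div 2"] by (auto simp: fp_def)
next
  case False
  have "degree xr = 1" "xr \<noteq> 0" by (auto simp: xr_def)
  moreover have "w (i div 2) \<noteq> 0" using w_props[of "i div 2"] by auto
  ultimately show ?thesis using False w_props[of "i div 2"] by (auto simp: fp_def degree_mult_eq)
qed

lemma z_carrier[simp]: "z i \<in> carrier_vec n"
  unfolding z_def using B v by simp

lemma Kq_carrier[simp]: "Kq \<in> carrier_mat n n" unfolding Kq_def by simp

lemma Kq_index: "r < n \<Longrightarrow> i < n \<Longrightarrow> Kq $$ (r, i) = z i $ r"
  unfolding Kq_def by simp

lemma Kq_mult_vec: "c \<in> carrier_vec n \<Longrightarrow> r < n \<Longrightarrow> (Kq *\<^sub>v c) $ r = (\<Sum>i<n. z i $ r * c $ i)"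
  unfolding Kq_def by (simp add: scalar_prod_def atLeast0LessThan)

lemma Kq_inj:
  assumes c: "c \<in> carrier_vec n" and k: "Kq *\<^sub>v c = 0\<^sub>v n"
  shows "c = 0\<^sub>v n"
proof -
  let ?g = "\<Sum>i<n. Polynomial.smult (c $ i) (fp i)"
  have "poly_mat ?g B *\<^sub>v v = 0\<^sub>v n"
  proof (rule eq_vecI)
    fix r assume r: "r < dim_vec (0\<^sub>v n :: 'a vec)"
    then have r: "r < n" by simp
    have "(poly_mat ?g B *\<^sub>v v) $ r = (\<Sum>i<n. (poly_mat (Polynomial.smult (c $ i) (fp i)) B *\<^sub>v v) $ r)"
      by (rule pm_sum_vec[OF B v r]) simp
    also have "\<dots> = (\<Sum>i<n. z i $ r * c $ i)"
      by (simp add: pm_smult_vec[OF B v r] z_def mult.commute)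
    also have "\<dots> = (Kq *\<^sub>v c) $ r" using Kq_mult_vec[OF c r] by simp
    also have "\<dots> = 0" using k r by simp
    finally show "(poly_mat ?g B *\<^sub>v v) $ r = (0\<^sub>v n :: 'a vec) $ r" using r by simp
  qed (use B in simp)
  then have "?g = 0 \<or> n \<le> degree ?g" using cyc by auto
  moreover have "degree ?g < n"
    by (rule degree_lin_comb_less) (use fp_props n_pos in auto)
  ultimately have "?g = 0" by simp
  then have "\<forall>i<n. c $ i = 0"
    by (intro lin_indep_deg[of n fp "\<lambda>i. c $ i"]) (use fp_props in auto)
  then show ?thesis using c by (intro eq_vecI) auto
qed

lemma Kq_inverse: "\<exists>Ki. Ki \<in> carrier_mat n n \<and> Kq * Ki = 1\<^sub>m n \<and> Ki * Kq = 1\<^sub>m n"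
  by (rule mat_inverse_exists[OF Kq_carrier Kq_inj])

lemma Bz_even:
  assumes j: "j < m" and r: "r < n"
  shows "(B *\<^sub>v z (2*j)) $ r = z (2*j+1) $ r + \<rho> * z (2*j) $ r"
proof -
  have "[:0,1:] * fp (2*j) = fp (2*j+1) + Polynomial.smult \<rho> (fp (2*j))"
    by (simp add: fp_def xr_def algebra_simps)
  then have "(B *\<^sub>v z (2*j)) $ r = (poly_mat (fp (2*j+1) + Polynomial.smult \<rho> (fp (2*j))) B *\<^sub>v v) $ r"
    using pm_x_vec[OF B v] by (simp add: z_def)
  then show ?thesis by (simp add: pm_add_vec[OF B v r] pm_smult_vec[OF B v r] z_def)
qed

lemma Bz_odd:
  assumes j: "j < m - 1" and r: "r < n"
  shows "(B *\<^sub>v z (2*j+1)) $ r = z (2*j+2) $ r + lam j * z (2*j+1) $ r"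
proof -
  have w1: "w (Suc j) = w j * (xr * [:-lam j, 1:])" by (simp add: w_def)
  have "[:0,1:] * fp (2*j+1) = fp (2*j+2) + Polynomial.smult (lam j) (fp (2*j+1))"
  proof -
    have e: "fp (2*j+1) = xr * w j" "fp (2*j+2) = w (Suc j)" by (simp_all add: fp_def)
    show ?thesis unfolding e w1 by (simp add: algebra_simps)
  qed
  then have "(B *\<^sub>v z (2*j+1)) $ r = (poly_mat (fp (2*j+2) + Polynomial.smult (lam j) (fp (2*j+1))) B *\<^sub>v v) $ r"
    using pm_x_vec[OF B v] by (simp add: z_def)
  then show ?thesis by (simp add: pm_add_vec[OF B v r] pm_smult_vec[OF B v r] z_def)
qed

end




lemma sum_delta2:
  fixes g :: "nat \<Rightarrow> 'a :: comm_ring_1"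
  assumes a: "a < n" and b: "b < n" and ab: "a \<noteq> b"
  shows "(\<Sum>k<n. g k * ((if k = a then x else 0) + (if k = b then y else 0))) = g a * x + g b * y"
proof -
  have "(\<Sum>k<n. g k * ((if k = a then x else 0) + (if k = b then y else 0)))
      = (\<Sum>k<n. (if k = a then g a * x else 0)) + (\<Sum>k<n. (if k = b then g b * y else 0))"
    by (subst sum.distrib[symmetric]) (rule sum.cong, use ab in auto)
  also have "\<dots> = g a * x + g b * y" using a b by simp
  finally show ?thesis .
qed

context core
begin

definition Ki :: "'a mat" where
  "Ki = (SOME Ki. Ki \<in> carrier_mat n n \<and> Kq * Ki = 1\<^sub>m n \<and> Ki * Kq = 1\<^sub>m n)"

lemma Ki_all: "Ki \<in> carrier_mat n n \<and> Kq * Ki = 1\<^sub>m n \<and> Ki * Kq = 1\<^sub>m n"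
  unfolding Ki_def by (rule someI_ex[OF Kq_inverse])

lemma Ki: "Ki \<in> carrier_mat n n" "Kq * Ki = 1\<^sub>m n" "Ki * Kq = 1\<^sub>m n"
  using Ki_all by blast+

definition \<sigma> :: "'a vec" where "\<sigma> = Ki *\<^sub>v (B *\<^sub>v z (n - 1))"

lemma \<sigma>_carrier[simp]: "\<sigma> \<in> carrier_vec n"
  unfolding \<sigma>_def using Ki B by simp

definition Nb :: "'a mat" where
  "Nb = mat n n (\<lambda>(r,i). if even i \<and> r = i + 1 then 1 else 0)"

definition Db :: "'a mat" where
  "Db = mat n n (\<lambda>(r,i). if i = n - 1 then \<sigma> $ r else if even i then (if r = i then \<rho> else 0)
     else (if r = i then lam (i div 2) else if r = i + 1 then 1 else 0))"

lemma Kq_dim[simp]: "dim_row Kq = n" "dim_col Kq = n" unfolding Kq_def by auto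
lemma Nb_dim[simp]: "dim_row Nb = n" "dim_col Nb = n" unfolding Nb_def by auto
lemma Db_dim[simp]: "dim_row Db = n" "dim_col Db = n" unfolding Db_def by auto

lemma Nb_carrier[simp]: "Nb \<in> carrier_mat n n" unfolding Nb_def by simp
lemma Db_carrier[simp]: "Db \<in> carrier_mat n n" unfolding Db_def by simp

lemma n_even: "even n" using nm by simp

lemma z_dim[simp]: "dim_vec (z i) = n"
  using z_carrier[of i] unfolding carrier_vec_def by blast

lemma col_Kq:
  assumes i: "i < n" shows "col Kq i = z i"
proof (rule eq_vecI)
  show "dim_vec (col Kq i) = dim_vec (z i)" by simp
  fix r assume "r < dim_vec (z i)"
  then have r: "r < n" by simp
  show "col Kq i $ r = z i $ r" using r i by (simp add: Kq_index)
qed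

lemma Nb_sq: "Nb * Nb = 0\<^sub>m n n"
proof (rule eq_matI)
  fix r i assume r: "r < dim_row (0\<^sub>m n n :: 'a mat)" and i: "i < dim_col (0\<^sub>m n n :: 'a mat)"
  have "(Nb * Nb) $$ (r, i) = (\<Sum>k<n. Nb $$ (r, k) * Nb $$ (k, i))"
    using r i by (simp add: Nb_def scalar_prod_def atLeast0LessThan)
  also have "\<dots> = 0"
    by (rule sum.neutral) (use r i in \<open>auto simp: Nb_def\<close>)
  finally show "(Nb * Nb) $$ (r, i) = (0\<^sub>m n n :: 'a mat) $$ (r, i)" using r i by simp
qed (auto simp: Nb_def)

lemma BK: "B * Kq = Kq * (Nb + Db)"
proof (rule eq_matI)
  fix r i assume r: "r < dim_row (Kq * (Nb + Db))" and i: "i < dim_col (Kq * (Nb + Db))"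
  then have r: "r < n" and i: "i < n" by auto
  have lhs: "(B * Kq) $$ (r, i) = (B *\<^sub>v z i) $ r"
    using r i B by (simp add: col_Kq)
  have rhs: "(Kq * (Nb + Db)) $$ (r, i) = (\<Sum>k<n. z k $ r * (Nb + Db) $$ (k, i))"
    using r i by (simp add: scalar_prod_def atLeast0LessThan Kq_def)
  show "(B * Kq) $$ (r, i) = (Kq * (Nb + Db)) $$ (r, i)"
  proof (cases "i = n - 1")
    case True
    have "(\<Sum>k<n. z k $ r * (Nb + Db) $$ (k, i)) = (\<Sum>k<n. z k $ r * \<sigma> $ k)"
      by (rule sum.cong) (use True n_even n_pos in \<open>auto simp: Nb_def Db_def\<close>)
    also have "\<dots> = (Kq *\<^sub>v \<sigma>) $ r" using Kq_mult_vec[OF \<sigma>_carrier r] by simp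
    also have "Kq *\<^sub>v \<sigma> = (Kq * Ki) *\<^sub>v (B *\<^sub>v z (n - 1))"
    proof -
      have y: "B *\<^sub>v z (n - 1) \<in> carrier_vec n" using B by simp
      show ?thesis unfolding \<sigma>_def using assoc_mult_mat_vec[OF Kq_carrier Ki(1) y] by simp
    qed
    also have "\<dots> = B *\<^sub>v z (n - 1)" using Ki B by simp
    finally show ?thesis using lhs rhs True by simp
  next
    case False
    show ?thesis
    proof (cases "even i")
      case True
      then obtain j where j: "i = 2 * j" by (auto elim: evenE)
      have jm: "j < m" using i j nm by simp
      have i1: "i + 1 < n" using i False by simp
      have "(\<Sum>k<n. z k $ r * (Nb + Db) $$ (k, i))
          = (\<Sum>k<n. z k $ r * ((if k = i + 1 then 1 else 0) + (if k = i then \<rho> else 0)))"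
        by (rule sum.cong) (use True False i in \<open>auto simp: Nb_def Db_def\<close>)
      also have "\<dots> = z (i+1) $ r * 1 + z i $ r * \<rho>"
        by (rule sum_delta2) (use i i1 in auto)
      finally show ?thesis using lhs rhs Bz_even[OF jm r] j by (simp add: mult.commute)
    next
      case odd: False
      then obtain j where j: "i = 2 * j + 1" by (auto elim: oddE)
      have jm: "j < m - 1" using i j nm False by simp
      have i1: "i + 1 < n" using i False by simp
      have "(\<Sum>k<n. z k $ r * (Nb + Db) $$ (k, i))
          = (\<Sum>k<n. z k $ r * ((if k = i then lam j else 0) + (if k = i + 1 then 1 else 0)))"
        by (rule sum.cong) (use odd False i j in \<open>auto simp: Nb_def Db_def\<close>)
      also have "\<dots> = z i $ r * lam j + z (i+1) $ r * 1"
        by (rule sum_delta2) (use i i1 in auto)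
      finally show ?thesis using lhs rhs Bz_odd[OF jm r] j by (simp add: mult.commute add.commute)
    qed
  qed
qed (use B in auto)

lemma B_decomp: "B = Kq * (Nb + Db) * Ki"
proof -
  have "B = B * (Kq * Ki)" using B Ki by simp
  also have "\<dots> = (B * Kq) * Ki" using B Ki by (simp add: assoc_mult_mat[of _ n n _ n _ n])
  finally show ?thesis by (simp add: BK)
qed

lemma trace_B: "mat_trace B = mat_trace (Nb + Db)"
proof -
  have "mat_trace B = mat_trace (Kq * ((Nb + Db) * Ki))"
    using B_decomp Ki by (simp add: assoc_mult_mat[of _ n n _ n _ n])
  also have "\<dots> = mat_trace (((Nb + Db) * Ki) * Kq)"
    by (rule trace_mult_comm[of _ n]) (use Ki in auto)
  also have "((Nb + Db) * Ki) * Kq = Nb + Db"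
    using Ki by (simp add: assoc_mult_mat[of _ n n _ n _ n])
  finally show ?thesis .
qed

lemma sigma_last: "\<sigma> $ (n - 1) = s"
proof -
  have "mat_trace (Nb + Db) = (\<Sum>r<n. Db $$ (r, r))"
    by (simp add: mat_trace_def Nb_def Db_def)
  also have "\<dots> = (\<Sum>j<m. Db $$ (2*j, 2*j) + Db $$ (2*j+1, 2*j+1))"
    unfolding nm by (rule sum_even_odd)
  also have "\<dots> = (\<Sum>j<m. \<rho> + (if j = m - 1 then \<sigma> $ (n - 1) else lam j))"
  proof (rule sum.cong)
    fix j assume j: "j \<in> {..<m}"
    have j1: "2*j < n" "2*j+1 < n" "2*j \<noteq> n - 1" "(2*j+1 = n - 1) = (j = m - 1)"
      using j nm by auto
    have a: "Db $$ (2*j, 2*j) = \<rho>" using j1 by (auto simp: Db_def)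
    have b: "Db $$ (2*j+1, 2*j+1) = (if j = m - 1 then \<sigma> $ (n - 1) else lam j)"
      using j1 by (auto simp: Db_def)
    show "Db $$ (2*j, 2*j) + Db $$ (2*j+1, 2*j+1) = \<rho> + (if j = m - 1 then \<sigma> $ (n - 1) else lam j)"
      using a b by simp
  qed simp
  also have "\<dots> = of_nat m * \<rho> + (\<Sum>j<m. (if j = m - 1 then \<sigma> $ (n - 1) else lam j))"
    by (simp add: sum.distrib)
  also have "(\<Sum>j<m. (if j = m - 1 then \<sigma> $ (n - 1) else lam j)) = (\<Sum>j<m-1. lam j) + \<sigma> $ (n - 1)"
  proof -
    have mm: "m = Suc (m - 1)" using m1 by simp
    have "(\<Sum>j<m. (if j = m - 1 then \<sigma> $ (n - 1) else lam j))
        = (\<Sum>j<Suc (m-1). (if j = m - 1 then \<sigma> $ (n - 1) else lam j))" using mm by simp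
    also have "\<dots> = (\<Sum>j<m-1. (if j = m - 1 then \<sigma> $ (n - 1) else lam j)) + \<sigma> $ (n - 1)"
      by simp
    also have "(\<Sum>j<m-1. (if j = m - 1 then \<sigma> $ (n - 1) else lam j)) = (\<Sum>j<m-1. lam j)"
      by (rule sum.cong) auto
    finally show ?thesis .
  qed
  finally have "mat_trace B = of_nat m * \<rho> + ((\<Sum>j<m-1. lam j) + \<sigma> $ (n - 1))"
    using trace_B by simp
  then show ?thesis using st by (simp add: algebra_simps)
qed

end




lemma sum_support:
  fixes f :: "nat \<Rightarrow> 'a :: comm_monoid_add"
  assumes S: "S \<subseteq> {..<n}" and z: "\<And>k. k < n \<Longrightarrow> k \<notin> S \<Longrightarrow> f k = 0"
  shows "(\<Sum>k<n. f k) = (\<Sum>k\<in>S. f k)"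
  by (rule sum.mono_neutral_left[symmetric]) (use S z in auto)

context core
begin

definition cc :: "nat \<Rightarrow> 'a" where "cc j = 1 / (lam j - \<rho>)"

definition eps :: "nat \<Rightarrow> 'a" where
  "eps r = (if r = n - 1 then 1 else if odd r then \<sigma> $ r / (s - lam (r div 2))
     else (\<sigma> $ r + (if r = 0 then 0 else \<sigma> $ (r - 1) / (s - lam ((r - 1) div 2)))) / (s - \<rho>))"

definition Pm :: "'a mat" where
  "Pm = mat n n (\<lambda>(r,i). if i = n - 1 then eps r else if r = i then 1
     else if odd i \<and> r = i + 1 then cc (i div 2) else 0)"

definition dval :: "nat \<Rightarrow> 'a" where
  "dval i = (if i = n - 1 then s else if even i then \<rho> else lam (i div 2))"

definition Lm :: "'a mat" where
  "Lm = mat n n (\<lambda>(r,i). if r = i then dval i else 0)"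

lemma Pm_carrier[simp]: "Pm \<in> carrier_mat n n" unfolding Pm_def by simp
lemma Lm_carrier[simp]: "Lm \<in> carrier_mat n n" unfolding Lm_def by simp
lemma Pm_dim[simp]: "dim_row Pm = n" "dim_col Pm = n" unfolding Pm_def by auto
lemma Lm_dim[simp]: "dim_row Lm = n" "dim_col Lm = n" unfolding Lm_def by auto

lemma odd_last: "odd (n - 1)" using n_even n_pos by simp

lemma pred_last: "Suc k = n - 1 \<Longrightarrow> even k"
proof -
  assume h: "Suc k = n - 1"
  then have "n = Suc (Suc k)" using n_pos by arith
  then show ?thesis using n_even by simp
qed

lemma lam_ne: "odd i \<Longrightarrow> i < n - 1 \<Longrightarrow> lam (i div 2) \<noteq> \<rho> \<and> s \<noteq> lam (i div 2)"
proof -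
  assume i: "odd i" "i < n - 1"
  then have "i div 2 < m - 1" using nm by (auto elim!: oddE)
  then show ?thesis using lr sl by auto
qed

lemma PL: "(Pm * Lm) $$ (r, i) = Pm $$ (r, i) * dval i" if r: "r < n" and i: "i < n" for r i
proof -
  have "(Pm * Lm) $$ (r, i) = (\<Sum>k<n. Pm $$ (r, k) * Lm $$ (k, i))"
    using r i by (simp add: scalar_prod_def atLeast0LessThan)
  also have "\<dots> = (\<Sum>k\<in>{i}. Pm $$ (r, k) * Lm $$ (k, i))"
    by (rule sum_support) (use i in \<open>auto simp: Lm_def\<close>)
  also have "\<dots> = Pm $$ (r, i) * dval i" using i by (simp add: Lm_def)
  finally show ?thesis .
qed

lemma DP: "Db * Pm = Pm * Lm"
proof (rule eq_matI)
  fix r i assume r: "r < dim_row (Pm * Lm)" and i: "i < dim_col (Pm * Lm)"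
  then have r: "r < n" and i: "i < n" by auto
  have lhs: "(Db * Pm) $$ (r, i) = (\<Sum>k<n. Db $$ (r, k) * Pm $$ (k, i))"
    using r i by (simp add: scalar_prod_def atLeast0LessThan)
  have n1: "n - 1 < n" using n_pos by simp
  show "(Db * Pm) $$ (r, i) = (Pm * Lm) $$ (r, i)"
  proof (cases "i = n - 1")
    case iL: True
    have rhs: "(Pm * Lm) $$ (r, i) = eps r * s" using PL[OF r i] iL r by (simp add: Pm_def dval_def)
    show ?thesis
    proof (cases "r = n - 1")
      case rL: True
      have "(\<Sum>k<n. Db $$ (r, k) * Pm $$ (k, i)) = (\<Sum>k\<in>{n-1}. Db $$ (r, k) * Pm $$ (k, i))"
        by (rule sum_support) (use n1 rL iL odd_last pred_last in \<open>auto simp: Db_def\<close>)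
      also have "\<dots> = \<sigma> $ (n - 1) * eps (n - 1)" using rL iL n1 by (simp add: Db_def Pm_def)
      finally show ?thesis using lhs rhs rL sigma_last by (simp add: eps_def)
    next
      case rL: False
      show ?thesis
      proof (cases "odd r")
        case True
        have rl: "r < n - 1" using r rL by simp
        have "(\<Sum>k<n. Db $$ (r, k) * Pm $$ (k, i)) = (\<Sum>k\<in>{r, n-1}. Db $$ (r, k) * Pm $$ (k, i))"
          by (rule sum_support) (use n1 r rL iL True in \<open>auto simp: Db_def\<close>)
        also have "\<dots> = lam (r div 2) * eps r + \<sigma> $ r * eps (n - 1)"
          using rL iL n1 r True by (simp add: Db_def Pm_def)
        also have "\<dots> = eps r * s"
          using lam_ne[OF True rl] True rL by (simp add: eps_def field_simps)
        finally show ?thesis using lhs rhs by simp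
      next
        case False
        show ?thesis
        proof (cases "r = 0")
          case True
          have "(\<Sum>k<n. Db $$ (r, k) * Pm $$ (k, i)) = (\<Sum>k\<in>{r, n-1}. Db $$ (r, k) * Pm $$ (k, i))"
            by (rule sum_support) (use n1 r rL iL False True in \<open>auto simp: Db_def\<close>)
          also have "\<dots> = \<rho> * eps r + \<sigma> $ r * eps (n - 1)"
            using rL iL n1 r False by (simp add: Db_def Pm_def)
          also have "\<dots> = eps r * s"
            using sr True rL by (simp add: eps_def field_simps)
          finally show ?thesis using lhs rhs by simp
        next
          case r0: False
          have o: "odd (r - 1)" using False r0 by simp
          have rl: "r - 1 < n - 1" using r r0 by simp
          have "(\<Sum>k<n. Db $$ (r, k) * Pm $$ (k, i)) = (\<Sum>k\<in>{r - 1, r, n-1}. Db $$ (r, k) * Pm $$ (k, i))"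
            by (rule sum_support) (use n1 r rL iL False r0 in \<open>auto simp: Db_def\<close>)
          also have "\<dots> = eps (r - 1) + \<rho> * eps r + \<sigma> $ r * eps (n - 1)"
            using rL iL n1 r False r0 rl o by (simp add: Db_def Pm_def)
          also have "\<dots> = eps r * s"
          proof -
            have rl': "r - 1 \<noteq> n - 1" using rl by simp
            have er: "eps r = (\<sigma> $ r + eps (r - 1)) / (s - \<rho>)"
              using r0 rL False o rl' by (simp add: eps_def)
            have e1: "eps (n - 1) = 1" by (simp add: eps_def)
            have sr': "s - \<rho> \<noteq> 0" using sr by simp
            show ?thesis unfolding e1 er using sr' by (simp add: field_simps)
          qed
          finally show ?thesis using lhs rhs by simp
        qed
      qed
    qed
  next
    case iL: False
    show ?thesis
    proof (cases "even i")
      case True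
      have "(\<Sum>k<n. Db $$ (r, k) * Pm $$ (k, i)) = (\<Sum>k\<in>{i}. Db $$ (r, k) * Pm $$ (k, i))"
        by (rule sum_support) (use i iL True in \<open>auto simp: Pm_def\<close>)
      also have "\<dots> = Db $$ (r, i)" using i iL True by (simp add: Pm_def)
      also have "\<dots> = (Pm * Lm) $$ (r, i)"
        using PL[OF r i] r i iL True by (simp add: Db_def Pm_def dval_def)
      finally show ?thesis using lhs by simp
    next
      case False
      have il: "i < n - 1" using i iL by simp
      have i1: "i + 1 < n" "i + 1 \<noteq> n - 1" "even (i + 1)" using il False odd_last pred_last[of i] by auto
      have "(\<Sum>k<n. Db $$ (r, k) * Pm $$ (k, i)) = (\<Sum>k\<in>{i, i+1}. Db $$ (r, k) * Pm $$ (k, i))"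
        by (rule sum_support) (use i i1 iL False in \<open>auto simp: Pm_def\<close>)
      also have "\<dots> = Db $$ (r, i) + Db $$ (r, i + 1) * cc (i div 2)"
        using i i1 iL False by (simp add: Pm_def)
      also have "\<dots> = (Pm * Lm) $$ (r, i)"
        using PL[OF r i] r i iL False i1 lam_ne[OF False il]
        by (auto simp: Db_def Pm_def dval_def cc_def field_simps)
      finally show ?thesis using lhs by simp
    qed
  qed
qed auto

end




lemma mult_carrier_nn[simp]:
  "A \<in> carrier_mat n n \<Longrightarrow> B \<in> carrier_mat n n \<Longrightarrow> A * B \<in> carrier_mat n n"
  by (rule mult_carrier_mat)

context core
begin

lemma Pm_row:
  assumes x: "x \<in> carrier_vec n" and r: "r < n"
  shows "(Pm *\<^sub>v x) $ r = (\<Sum>k<n. Pm $$ (r, k) * x $ k)"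
  using x r by (simp add: scalar_prod_def atLeast0LessThan)

lemma Pm_inj:
  assumes x: "x \<in> carrier_vec n" and k0: "Pm *\<^sub>v x = 0\<^sub>v n"
  shows "x = 0\<^sub>v n"
proof -
  have n1: "n - 1 < n" using n_pos by simp
  have z: "\<And>r. r < n \<Longrightarrow> (\<Sum>k<n. Pm $$ (r, k) * x $ k) = 0"
    using k0 Pm_row[OF x] by (metis index_zero_vec(1))
  have xl: "x $ (n - 1) = 0"
  proof -
    have "(\<Sum>k<n. Pm $$ (n - 1, k) * x $ k) = (\<Sum>k\<in>{n-1}. Pm $$ (n - 1, k) * x $ k)"
      by (rule sum_support) (use n1 pred_last in \<open>auto simp: Pm_def\<close>)
    also have "\<dots> = x $ (n - 1)" using n1 by (simp add: Pm_def eps_def)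
    finally show ?thesis using z[OF n1] by simp
  qed
  have xo: "x $ r = 0" if r: "r < n - 1" and o: "odd r" for r
  proof -
    have rn: "r < n" using r by simp
    have "(\<Sum>k<n. Pm $$ (r, k) * x $ k) = (\<Sum>k\<in>{r, n-1}. Pm $$ (r, k) * x $ k)"
      by (rule sum_support) (use n1 r o in \<open>auto simp: Pm_def\<close>)
    also have "\<dots> = x $ r" using n1 r xl by (simp add: Pm_def)
    finally show ?thesis using z[OF rn] by simp
  qed
  have xe: "x $ r = 0" if r: "r < n" and e: "even r" for r
  proof (cases "r = 0")
    case True
    have rl: "r \<noteq> n - 1" using e odd_last by auto
    have "(\<Sum>k<n. Pm $$ (r, k) * x $ k) = (\<Sum>k\<in>{r, n-1}. Pm $$ (r, k) * x $ k)"
      by (rule sum_support) (use n1 r True in \<open>auto simp: Pm_def\<close>)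
    also have "\<dots> = x $ r" using n1 r xl rl by (simp add: Pm_def)
    finally show ?thesis using z[OF r] by simp
  next
    case False
    have rl: "r \<noteq> n - 1" using e odd_last by auto
    have o: "odd (r - 1)" using e False by simp
    have r1: "r - 1 < n - 1" using r False by simp
    have "(\<Sum>k<n. Pm $$ (r, k) * x $ k) = (\<Sum>k\<in>{r - 1, r, n-1}. Pm $$ (r, k) * x $ k)"
      by (rule sum_support) (use n1 r False in \<open>auto simp: Pm_def\<close>)
    also have "\<dots> = x $ r"
    proof -
      have d: "r - 1 \<noteq> r" "r - 1 \<noteq> n - 1" using False r1 by auto
      show ?thesis using n1 r xl rl False xo[OF r1 o] d by (simp add: Pm_def)
    qed
    finally show ?thesis using z[OF r] by simp
  qed
  show ?thesis
  proof (rule eq_vecI)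
    fix r assume "r < dim_vec (0\<^sub>v n :: 'a vec)"
    then have r: "r < n" by simp
    show "x $ r = (0\<^sub>v n :: 'a vec) $ r"
    proof (cases "even r")
      case True then show ?thesis using xe r by simp
    next
      case False
      then have "r < n - 1 \<or> r = n - 1" using r by auto
      then show ?thesis using xo xl False r by auto
    qed
  qed (use x in simp)
qed

lemma Lm_eigen:
  assumes e: "eigenvalue Lm e"
  shows "\<exists>i<n. e = dval i"
proof -
  obtain x where x: "x \<in> carrier_vec n" "x \<noteq> 0\<^sub>v n" "Lm *\<^sub>v x = e \<cdot>\<^sub>v x"
    using e unfolding eigenvalue_def eigenvector_def by auto
  have "\<exists>i<n. x $ i \<noteq> 0"
  proof (rule ccontr)
    assume "\<not> ?thesis"
    then have "x = 0\<^sub>v n" using x(1) by (intro eq_vecI) auto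
    then show False using x(2) by simp
  qed
  then obtain i where i: "i < n" "x $ i \<noteq> 0" by blast
  have "(Lm *\<^sub>v x) $ i = (\<Sum>k<n. Lm $$ (i, k) * x $ k)"
    using x(1) i by (simp add: scalar_prod_def atLeast0LessThan)
  also have "\<dots> = (\<Sum>k\<in>{i}. Lm $$ (i, k) * x $ k)"
    by (rule sum_support) (use i in \<open>auto simp: Lm_def\<close>)
  also have "\<dots> = dval i * x $ i" using i by (simp add: Lm_def)
  finally have "dval i * x $ i = e * x $ i" using x(3) x(1) i by simp
  then show ?thesis using i by auto
qed

theorem core_result:
  "\<exists>N D. N \<in> carrier_mat n n \<and> D \<in> carrier_mat n n \<and> B = N + D \<and> N * N = 0\<^sub>m n n \<and>
     diagonalizable D \<and> (\<forall>e. eigenvalue D e \<longrightarrow> e = \<rho> \<or> e = s \<or> (\<exists>j<m-1. e = lam j))"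
proof -
  obtain Pi where Pi: "Pi \<in> carrier_mat n n" "Pm * Pi = 1\<^sub>m n" "Pi * Pm = 1\<^sub>m n"
    using mat_inverse_exists[OF Pm_carrier Pm_inj] by blast
  have KiC: "Ki \<in> carrier_mat n n" using Ki by simp
  define N where "N = Kq * Nb * Ki"
  define D where "D = Kq * Db * Ki"
  have NC: "N \<in> carrier_mat n n" unfolding N_def using KiC by (metis mult_carrier_mat Kq_carrier Nb_carrier)
  have DC: "D \<in> carrier_mat n n" unfolding D_def using KiC by (metis mult_carrier_mat Kq_carrier Db_carrier)
  have BND: "B = N + D"
  proof -
    have "B = Kq * (Nb + Db) * Ki" by (rule B_decomp)
    also have "Kq * (Nb + Db) = Kq * Nb + Kq * Db"
      by (rule mult_add_distrib_mat[of _ n n]) auto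
    also have "(Kq * Nb + Kq * Db) * Ki = Kq * Nb * Ki + Kq * Db * Ki"
      by (rule add_mult_distrib_mat[of _ n n]) (use KiC in auto)
    finally show ?thesis unfolding N_def D_def .
  qed
  have NN: "N * N = 0\<^sub>m n n"
  proof -
    have "N * N = Kq * (Nb * ((Ki * Kq) * (Nb * Ki)))"
      unfolding N_def using KiC by (simp add: assoc_mult_mat[of _ n n _ n _ n])
    also have "\<dots> = Kq * ((Nb * Nb) * Ki)"
      using KiC Ki by (simp add: assoc_mult_mat[of _ n n _ n _ n])
    also have "\<dots> = 0\<^sub>m n n" using KiC by (simp add: Nb_sq)
    finally show ?thesis .
  qed
  have Db_eq: "Db = Pm * Lm * Pi"
  proof -
    have "Db = Db * (Pm * Pi)" using Pi by simp
    also have "\<dots> = (Db * Pm) * Pi" using Pi by (simp add: assoc_mult_mat[of _ n n _ n _ n])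
    finally show ?thesis by (simp add: DP)
  qed
  have sim: "similar_mat D Lm"
  proof (rule similar_matI[of D Lm "Kq * Pm" "Pi * Ki" n])
    show "{D, Lm, Kq * Pm, Pi * Ki} \<subseteq> carrier_mat n n" using DC Pi KiC by auto
    have "Kq * Pm * (Pi * Ki) = Kq * (Pm * Pi) * Ki"
      using Pi(1) KiC by (simp add: assoc_mult_mat[of _ n n _ n _ n])
    also have "\<dots> = 1\<^sub>m n" using Pi Ki by simp
    finally show "Kq * Pm * (Pi * Ki) = 1\<^sub>m n" .
    have "Pi * Ki * (Kq * Pm) = Pi * (Ki * Kq) * Pm"
      using Pi(1) KiC by (simp add: assoc_mult_mat[of _ n n _ n _ n])
    also have "\<dots> = 1\<^sub>m n" using Pi Ki by simp
    finally show "Pi * Ki * (Kq * Pm) = 1\<^sub>m n" .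
    have "D = Kq * (Pm * Lm * Pi) * Ki" unfolding D_def Db_eq ..
    also have "\<dots> = Kq * Pm * Lm * (Pi * Ki)"
      using Pi(1) KiC by (simp add: assoc_mult_mat[of _ n n _ n _ n])
    finally show "D = Kq * Pm * Lm * (Pi * Ki)" .
  qed
  have diagL: "diagonal_mat Lm" unfolding diagonal_mat_def Lm_def by auto
  have diag: "diagonalizable D" unfolding diagonalizable_def using diagL sim by blast
  have eig: "\<forall>e. eigenvalue D e \<longrightarrow> e = \<rho> \<or> e = s \<or> (\<exists>j<m-1. e = lam j)"
  proof (intro allI impI)
    fix e assume "eigenvalue D e"
    then have "poly (char_poly D) e = 0" using eigenvalue_root_char_poly[OF DC] by simp
    then have "poly (char_poly Lm) e = 0" using char_poly_similar[OF sim] by simp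
    then have "eigenvalue Lm e" using eigenvalue_root_char_poly[OF Lm_carrier] by simp
    then obtain i where i: "i < n" "e = dval i" using Lm_eigen by blast
    show "e = \<rho> \<or> e = s \<or> (\<exists>j<m-1. e = lam j)"
    proof (cases "i = n - 1")
      case True then show ?thesis using i by (simp add: dval_def)
    next
      case False
      show ?thesis
      proof (cases "even i")
        case True then show ?thesis using i False by (simp add: dval_def)
      next
        case o: False
        then have "i div 2 < m - 1" using i False nm by (auto elim!: oddE)
        then show ?thesis using i False o by (auto simp: dval_def)
      qed
    qed
  qed
  show ?thesis using NC DC BND NN diag eig by blast
qed

end




lemma char2_two:
  assumes "CHAR('a :: field) = 2" shows "(2 :: 'a) = 0"
  using of_nat_CHAR[where 'a='a] assms by simp

lemma char2_of_nat_even: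
  assumes "(2 :: 'a :: field) = 0" shows "(of_nat (2 * k) :: 'a) = 0"
  using assms by simp

theorem proposition2p11:
  fixes B :: "'a :: field mat" and k :: nat and a :: 'a
  assumes char2: "CHAR('a) = 2"
    and card4: "infinite (UNIV :: 'a set) \<or> card (UNIV :: 'a set) \<ge> 4"
    and k1: "k \<ge> 1"
    and B: "B \<in> carrier_mat (4 * k + 2) (4 * k + 2)"
    and nd: "non_derogative B"
    and a0: "a \<noteq> 0" and a1: "a \<noteq> 1"
  shows
    "(\<forall>c. mat_trace B = c \<and> c \<noteq> 0 \<longrightarrow>
       (\<exists>N D. N \<in> carrier_mat (4 * k + 2) (4 * k + 2) \<and> D \<in> carrier_mat (4 * k + 2) (4 * k + 2) \<and>
          B = N + D \<and> N * N = 0\<^sub>m (4 * k + 2) (4 * k + 2) \<and> diagonalizable D \<and>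
          (\<forall>e. eigenvalue D e \<longrightarrow> e \<in> {0, c, c * a, c * (a + 1)})))
   \<and> (\<forall>b. mat_trace B = 0 \<and> b ^ 2 = coeff (char_poly B) (4 * k) + a ^ 2 + a + 1 \<longrightarrow>
       (\<exists>N D. N \<in> carrier_mat (4 * k + 2) (4 * k + 2) \<and> D \<in> carrier_mat (4 * k + 2) (4 * k + 2) \<and>
          B = N + D \<and> N * N = 0\<^sub>m (4 * k + 2) (4 * k + 2) \<and> diagonalizable D \<and>
          (\<forall>e. eigenvalue D e \<longrightarrow> e \<in> {b, b + 1, b + a, b + a + 1})))"
proof -
  let ?n = "4 * k + 2" and ?m = "2 * k + 1"
  have two: "(2 :: 'a) = 0" by (rule char2_two[OF char2])
  have nm: "?n = 2 * ?m" by simp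
  obtain v where v: "v \<in> carrier_vec ?n"
    and cyc: "\<forall>h. poly_mat h B *\<^sub>v v = 0\<^sub>v ?n \<longrightarrow> h = 0 \<or> ?n \<le> degree h"
    using cyclic_vector[OF B nd] by blast
  have m1: "?m - 1 = 2 * k" by simp
  have e2k: "(of_nat (2 * k) :: 'a) = 0" using two by simp
  have e2k1: "(of_nat (2 * k + 1) :: 'a) = 1" using e2k by simp
  have a1': "a + 1 \<noteq> 0"
  proof
    assume "a + 1 = 0"
    then have "a = a + (a + 1)" by simp
    also have "\<dots> = 2 * a + 1" by (simp add: algebra_simps)
    also have "\<dots> = 1" using two by simp
    finally show False using a1 by simp
  qed
  have partA: "\<forall>c. mat_trace B = c \<and> c \<noteq> 0 \<longrightarrow>
       (\<exists>N D. N \<in> carrier_mat ?n ?n \<and> D \<in> carrier_mat ?n ?n \<and>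
          B = N + D \<and> N * N = 0\<^sub>m ?n ?n \<and> diagonalizable D \<and>
          (\<forall>e. eigenvalue D e \<longrightarrow> e \<in> {0, c, c * a, c * (a + 1)}))"
  proof (intro allI impI)
    fix c assume h: "mat_trace B = c \<and> c \<noteq> 0"
    then have tc: "mat_trace B = c" and c0: "c \<noteq> 0" by auto
    have ca: "c * a \<noteq> 0" using c0 a0 by simp
    have cca: "c \<noteq> c * a"
    proof
      assume "c = c * a"
      then have "c * 1 = c * a" by simp
      then have "a = 1" using c0 by (metis mult_left_cancel)
      then show False using a1 by simp
    qed
    have sumc: "(\<Sum>j<?m - 1. c * a) = 0" using e2k by simp
    have st: "c = mat_trace B - of_nat ?m * 0 - (\<Sum>j<?m - 1. c * a)"
      using tc sumc by simp
    have core: "core B ?n ?m v 0 c (\<lambda>j. c * a)"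
      by (unfold_locales) (use B v cyc ca c0 cca st in auto)
    obtain N D where ND: "N \<in> carrier_mat ?n ?n" "D \<in> carrier_mat ?n ?n" "B = N + D" "N * N = 0\<^sub>m ?n ?n"
      "diagonalizable D" "\<forall>e. eigenvalue D e \<longrightarrow> e = 0 \<or> e = c \<or> (\<exists>j<?m-1. e = c * a)"
      using core.core_result[OF core] by blast
    show "\<exists>N D. N \<in> carrier_mat ?n ?n \<and> D \<in> carrier_mat ?n ?n \<and>
          B = N + D \<and> N * N = 0\<^sub>m ?n ?n \<and> diagonalizable D \<and>
          (\<forall>e. eigenvalue D e \<longrightarrow> e \<in> {0, c, c * a, c * (a + 1)})"
      using ND by blast
  qed
  have partB: "\<forall>b. mat_trace B = 0 \<and> b ^ 2 = coeff (char_poly B) (4 * k) + a ^ 2 + a + 1 \<longrightarrow>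
       (\<exists>N D. N \<in> carrier_mat ?n ?n \<and> D \<in> carrier_mat ?n ?n \<and>
          B = N + D \<and> N * N = 0\<^sub>m ?n ?n \<and> diagonalizable D \<and>
          (\<forall>e. eigenvalue D e \<longrightarrow> e \<in> {b, b + 1, b + a, b + a + 1}))"
  proof (intro allI impI)
    fix b assume h: "mat_trace B = 0 \<and> b ^ 2 = coeff (char_poly B) (4 * k) + a ^ 2 + a + 1"
    then have t0: "mat_trace B = 0" by simp
    define lam where "lam = (\<lambda>j::nat. if j = 0 then b + a + 1 else b + a)"
    have lr: "\<forall>j<?m-1. lam j \<noteq> b" using a0 a1' by (auto simp: lam_def add.assoc)
    have sr: "b + 1 \<noteq> b" by simp
    have sl: "\<forall>j<?m-1. b + 1 \<noteq> lam j" using a0 a1 by (auto simp: lam_def)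
    have sum: "(\<Sum>j<?m - 1. lam j) = (b + a + 1) + of_nat (2 * k - 1) * (b + a)"
    proof -
      have "{..<2 * k} = insert 0 {1..<2 * k}" using k1 by auto
      then have "(\<Sum>j<2 * k. lam j) = lam 0 + (\<Sum>j\<in>{1..<2 * k}. lam j)" by simp
      also have "(\<Sum>j\<in>{1..<2 * k}. lam j) = (\<Sum>j\<in>{1..<2 * k}. b + a)"
        by (rule sum.cong) (auto simp: lam_def)
      also have "\<dots> = of_nat (2 * k - 1) * (b + a)" by simp
      finally show ?thesis using m1 by (simp add: lam_def)
    qed
    have o1: "(of_nat (2 * k - 1) :: 'a) = 1"
    proof -
      have "2 * k - 1 = 2 * (k - 1) + 1" using k1 by simp
      then have "(of_nat (2 * k - 1) :: 'a) = of_nat (2 * (k - 1)) + 1" by simp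
      also have "(of_nat (2 * (k - 1)) :: 'a) = 0" using two by simp
      finally show ?thesis by simp
    qed
    have st: "b + 1 = mat_trace B - of_nat ?m * b - (\<Sum>j<?m - 1. lam j)"
    proof -
      have "mat_trace B - of_nat ?m * b - (\<Sum>j<?m - 1. lam j) = - b - ((b + a + 1) + (b + a))"
        using t0 e2k1 sum o1 by simp
      also have "\<dots> = (b + 1) - 2 * (2 * b + a + 1)" by (simp add: algebra_simps)
      also have "\<dots> = b + 1" using two by simp
      finally show ?thesis by simp
    qed
    have core: "core B ?n ?m v b (b + 1) lam"
      by (unfold_locales) (use B v cyc lr sr sl st in auto)
    obtain N D where ND: "N \<in> carrier_mat ?n ?n" "D \<in> carrier_mat ?n ?n" "B = N + D" "N * N = 0\<^sub>m ?n ?n"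
      "diagonalizable D" "\<forall>e. eigenvalue D e \<longrightarrow> e = b \<or> e = b + 1 \<or> (\<exists>j<?m-1. e = lam j)"
      using core.core_result[OF core] by blast
    have "\<forall>e. eigenvalue D e \<longrightarrow> e \<in> {b, b + 1, b + a, b + a + 1}"
      using ND(6) by (auto simp: lam_def split: if_splits)
    then show "\<exists>N D. N \<in> carrier_mat ?n ?n \<and> D \<in> carrier_mat ?n ?n \<and>
          B = N + D \<and> N * N = 0\<^sub>m ?n ?n \<and> diagonalizable D \<and>
          (\<forall>e. eigenvalue D e \<longrightarrow> e \<in> {b, b + 1, b + a, b + a + 1})"
      using ND by blast
  qed
  show ?thesis using partA partB by blast
qed



end
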